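(* $(\mathbb{S},\tau^{-1})$ is a final coalgebra for $M\otimes-\colon\mathsf{SquaSet}\to\mathsf{SquaSet}$.
   Context: Let $M_0=\{(r,s)\in[0,1]^2: r\in\{0,1\}\text{ or } s\in\{0,1\}\}$. A square set is a pair $(X,S_X)$ with $X$ a set and $S_X\colon M_0\to X$ injective; $\mathsf{SquaSet}$ has square sets as objects and maps $f$ with $f\circ S_X=S_Y$ as morphisms. Let $N=\{0,1,2\}^2$, $M=N\setminus\{(1,1)\}$, also viewed as points of $\mathbb{R}^2$. For a square set $X$, $M\otimes X=(M\times X)/\!\sim$, where $\sim$ is the equivalence relation generated by $(m,S_X(p))\sim(n,S_X(q))$ whenever $m,n\in M$ differ by exactly $1$ in exactly one coordinate and $(m+p)/3=(n+q)/3$; $m\otimes x$ denotes the class of $(m,x)$; $S_{M\otimes X}(p)=m\otimes S_X(3p-m)$ for any $m\in M$ with $p\in(m+[0,1]^2)/3$; $(M\otimes f)(m\otimes x)=m\otimes f(x)$. The Sierpinski carpet $\mathbb{S}$ is the unique nonempty compact $K\subseteq[0,1]^2$ with $K=\bigcup_{m\in M}\frac13(m+K)$, with $S_{\mathbb{S}}$ the inclusion of $M_0$. $\tau\colon M\otimes\mathbb{S}\to\mathbb{S}$, $\tau(m\otimes s)=\frac13(m+s)$, is a bijection. A coalgebra is $(A,a\colon A\to FA)$; a final coalgebra admits a unique coalgebra morphism $h$ (with $b\circ h=Fh\circ a$) from every coalgebra. *)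

theory Defs
  imports "HOL-Analysis.Analysis"
begin

type_synonym pt = "real \<times> real"

definition M0 :: "pt set" where
  "M0 = {(r,s). 0 \<le> r \<and> r \<le> 1 \<and> 0 \<le> s \<and> s \<le> 1 \<and>
                 (r = 0 \<or> r = 1 \<or> s = 0 \<or> s = 1)}"

definition unit_sq :: "pt set" where
  "unit_sq = {(r,s). 0 \<le> r \<and> r \<le> 1 \<and> 0 \<le> s \<and> s \<le> 1}"

definition square_set :: "'a set \<Rightarrow> (pt \<Rightarrow> 'a) \<Rightarrow> bool" where
  "square_set X S \<longleftrightarrow> S ` M0 \<subseteq> X \<and> inj_on S M0"

definition squaset_mor :: "'a set \<Rightarrow> (pt \<Rightarrow> 'a) \<Rightarrow> 'b set \<Rightarrow> (pt \<Rightarrow> 'b) \<Rightarrow> ('a \<Rightarrow> 'b) \<Rightarrow> bool" where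
  "squaset_mor X S Y T f \<longleftrightarrow> f ` X \<subseteq> Y \<and> (\<forall>p\<in>M0. f (S p) = T p)"

definition Mset :: "(int \<times> int) set" where
  "Mset = ({0,1,2} \<times> {0,1,2}) - {(1,1)}"

definition cellpt :: "int \<times> int \<Rightarrow> pt \<Rightarrow> pt" where
  "cellpt m p = ((of_int (fst m) + fst p) / 3, (of_int (snd m) + snd p) / 3)"

definition uncell :: "int \<times> int \<Rightarrow> pt \<Rightarrow> pt" where
  "uncell m p = (3 * fst p - of_int (fst m), 3 * snd p - of_int (snd m))"

definition adjacent :: "int \<times> int \<Rightarrow> int \<times> int \<Rightarrow> bool" where
  "adjacent m n \<longleftrightarrow> (fst m = fst n \<and> \<bar>snd m - snd n\<bar> = 1) \<or>
                     (snd m = snd n \<and> \<bar>fst m - fst n\<bar> = 1)"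

definition glue_gen :: "(pt \<Rightarrow> 'a) \<Rightarrow> ((int \<times> int) \<times> 'a) rel" where
  "glue_gen S = {((m, S p), (n, S q)) | m n p q.
      m \<in> Mset \<and> n \<in> Mset \<and> adjacent m n \<and> p \<in> M0 \<and> q \<in> M0 \<and> cellpt m p = cellpt n q}"

definition glue_rel :: "'a set \<Rightarrow> (pt \<Rightarrow> 'a) \<Rightarrow> ((int \<times> int) \<times> 'a) rel" where
  "glue_rel X S = Id_on (Mset \<times> X) \<union> (glue_gen S \<union> (glue_gen S)\<inverse>)\<^sup>+"

definition tensor_carrier :: "'a set \<Rightarrow> (pt \<Rightarrow> 'a) \<Rightarrow> ((int \<times> int) \<times> 'a) set set" where
  "tensor_carrier X S = (Mset \<times> X) // glue_rel X S"

definition tensor_el :: "'a set \<Rightarrow> (pt \<Rightarrow> 'a) \<Rightarrow> int \<times> int \<Rightarrow> 'a \<Rightarrow> ((int \<times> int) \<times> 'a) set" where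
  "tensor_el X S m x = glue_rel X S `` {(m, x)}"

definition tensor_S :: "'a set \<Rightarrow> (pt \<Rightarrow> 'a) \<Rightarrow> pt \<Rightarrow> ((int \<times> int) \<times> 'a) set" where
  "tensor_S X S p = (let m = (SOME m. m \<in> Mset \<and> p \<in> cellpt m ` unit_sq)
                     in tensor_el X S m (S (uncell m p)))"

definition tensor_map :: "'b set \<Rightarrow> (pt \<Rightarrow> 'b) \<Rightarrow> ('a \<Rightarrow> 'b) \<Rightarrow>
    ((int \<times> int) \<times> 'a) set \<Rightarrow> ((int \<times> int) \<times> 'b) set" where
  "tensor_map Y T f c = (let (m, x) = (SOME mx. mx \<in> c) in tensor_el Y T m (f x))"

definition carpet :: "pt set" where
  "carpet = (THE K. K \<noteq> {} \<and> compact K \<and> K \<subseteq> unit_sq \<and>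
                    K = (\<Union>m\<in>Mset. cellpt m ` K))"

definition S_carpet :: "pt \<Rightarrow> pt" where
  "S_carpet p = p"

definition tau :: "((int \<times> int) \<times> pt) set \<Rightarrow> pt" where
  "tau c = (let (m, s) = (SOME ms. ms \<in> c) in cellpt m s)"

definition tau_inv :: "pt \<Rightarrow> ((int \<times> int) \<times> pt) set" where
  "tau_inv = inv_into (tensor_carrier carpet S_carpet) tau"

definition coalgebra :: "'a set \<Rightarrow> (pt \<Rightarrow> 'a) \<Rightarrow> ('a \<Rightarrow> ((int \<times> int) \<times> 'a) set) \<Rightarrow> bool" where
  "coalgebra A SA a \<longleftrightarrow> square_set A SA \<and>
     squaset_mor A SA (tensor_carrier A SA) (tensor_S A SA) a"

definition coalg_mor :: "'a set \<Rightarrow> (pt \<Rightarrow> 'a) \<Rightarrow> ('a \<Rightarrow> ((int \<times> int) \<times> 'a) set) \<Rightarrow>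
    'b set \<Rightarrow> (pt \<Rightarrow> 'b) \<Rightarrow> ('b \<Rightarrow> ((int \<times> int) \<times> 'b) set) \<Rightarrow> ('a \<Rightarrow> 'b) \<Rightarrow> bool" where
  "coalg_mor A SA a B SB b h \<longleftrightarrow> squaset_mor A SA B SB h \<and>
     (\<forall>x\<in>A. b (h x) = tensor_map B SB h (a x))"

end

theory Submission
  imports Defs
begin


definition Fc :: "pt set \<Rightarrow> pt set" where "Fc K = (\<Union>m\<in>Mset. cellpt m ` K)"

lemma Mset_D: "m \<in> Mset \<Longrightarrow> fst m \<in> {0,1,2} \<and> snd m \<in> {0,1,2} \<and> m \<noteq> (1,1)"
  by (auto simp: Mset_def)

lemma cellpt_unit: "m \<in> Mset \<Longrightarrow> p \<in> unit_sq \<Longrightarrow> cellpt m p \<in> unit_sq"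
  by (cases m; cases p) (auto simp: Mset_def cellpt_def unit_sq_def)

lemma M0_unit: "M0 \<subseteq> unit_sq" by (auto simp: M0_def unit_sq_def)
lemma unit_sq_eq: "unit_sq = {0..1} \<times> {0..1}" by (auto simp: unit_sq_def)
lemma compact_unit_sq: "compact unit_sq" by (simp add: unit_sq_eq compact_Times)
lemma cont_cellpt: "continuous_on S (cellpt m)" unfolding cellpt_def by (intro continuous_intros) auto

lemma cellpt_fst: "fst (cellpt m p) = (of_int (fst m) + fst p)/3" by (simp add: cellpt_def)
lemma cellpt_snd: "snd (cellpt m p) = (of_int (snd m) + snd p)/3" by (simp add: cellpt_def)

lemma cellpt_diff: "fst (cellpt m a) - fst (cellpt m b) = (fst a - fst b)/3"
  "snd (cellpt m a) - snd (cellpt m b) = (snd a - snd b)/3"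
  by (simp_all add: cellpt_def field_simps)

lemma uncell_cellpt[simp]: "uncell m (cellpt m p) = p"
  by (cases p) (simp add: uncell_def cellpt_def field_simps)

lemma cellpt_inj: "cellpt m p = cellpt m q \<Longrightarrow> p = q"
  by (metis uncell_cellpt)

inductive_set Pc :: "pt set" where
  base: "p \<in> M0 \<Longrightarrow> p \<in> Pc"
| step: "p \<in> Pc \<Longrightarrow> m \<in> Mset \<Longrightarrow> cellpt m p \<in> Pc"

lemma Pc_unit: "p \<in> Pc \<Longrightarrow> p \<in> unit_sq"
  by (induction rule: Pc.induct) (auto simp: M0_unit[THEN subsetD] cellpt_unit)

lemma digit: "0 \<le> s \<Longrightarrow> s \<le> (1::real) \<Longrightarrow> \<exists>k::int. k \<in> {0,1,2} \<and> 0 \<le> 3 * s - of_int k \<and> 3 * s - of_int k \<le> 1"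
proof -
  assume a: "0 \<le> s" "s \<le> 1"
  show ?thesis
  proof (cases "s \<le> 1/3")
    case True then show ?thesis using a by (intro exI[of _ 0]) auto
  next
    case False
    show ?thesis
    proof (cases "s \<le> 2/3")
      case True then show ?thesis using a False by (intro exI[of _ 1]) auto
    next
      case F2: False then show ?thesis using a False by (intro exI[of _ 2]) auto
    qed
  qed
qed

lemma M0_F: "M0 \<subseteq> Fc M0"
proof
  fix p assume "p \<in> M0"
  then obtain r s where p: "p = (r,s)" and rs: "0 \<le> r" "r \<le> 1" "0 \<le> s" "s \<le> 1"
     and c: "r = 0 \<or> r = 1 \<or> s = 0 \<or> s = 1" by (auto simp: M0_def)
  obtain k where k: "k \<in> {0,1,2}" "0 \<le> 3 * s - of_int k" "3 * s - of_int k \<le> 1" using digit[OF rs(3,4)] by blast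
  obtain j where j: "j \<in> {0,1,2}" "0 \<le> 3 * r - of_int j" "3 * r - of_int j \<le> 1" using digit[OF rs(1,2)] by blast
  from c show "p \<in> Fc M0"
  proof (elim disjE)
    assume "r = 0"
    then have "p = cellpt (0,k) (0, 3 * s - of_int k)" "(0,k) \<in> Mset" "(0::real, 3 * s - of_int k) \<in> M0"
      using k by (auto simp: p cellpt_def Mset_def M0_def)
    then show ?thesis unfolding Fc_def by blast
  next
    assume "r = 1"
    then have "p = cellpt (2,k) (1, 3 * s - of_int k)" "(2,k) \<in> Mset" "(1::real, 3 * s - of_int k) \<in> M0"
      using k by (auto simp: p cellpt_def Mset_def M0_def)
    then show ?thesis unfolding Fc_def by blast
  next
    assume "s = 0"
    then have "p = cellpt (j,0) (3 * r - of_int j, 0)" "(j,0) \<in> Mset" "(3 * r - of_int j, 0::real) \<in> M0"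
      using j by (auto simp: p cellpt_def Mset_def M0_def)
    then show ?thesis unfolding Fc_def by blast
  next
    assume "s = 1"
    then have "p = cellpt (j,2) (3 * r - of_int j, 1)" "(j,2) \<in> Mset" "(3 * r - of_int j, 1::real) \<in> M0"
      using j by (auto simp: p cellpt_def Mset_def M0_def)
    then show ?thesis unfolding Fc_def by blast
  qed
qed

lemma finite_Mset: "finite Mset" by (simp add: Mset_def)

lemma closed_Fc: "compact K \<Longrightarrow> closed (Fc K)"
  unfolding Fc_def
  by (intro closed_UN finite_Mset ballI compact_imp_closed compact_continuous_image cont_cellpt)

lemma closure_by_coords:
  fixes p :: pt
  assumes "closed K" and "\<And>n::nat. \<exists>y\<in>K. \<bar>fst y - fst p\<bar> \<le> 1/3^n \<and> \<bar>snd y - snd p\<bar> \<le> 1/3^n"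
  shows "p \<in> K"
proof -
  have "p \<in> closure K"
    unfolding closure_approachable
  proof (intro allI impI)
    fix e :: real assume e: "e > 0"
    obtain n where n: "(1/3::real)^n < e/2" using real_arch_pow_inv[of "e/2" "1/3::real"] e by auto
    obtain y where y: "y \<in> K" "\<bar>fst y - fst p\<bar> \<le> 1/3^n" "\<bar>snd y - snd p\<bar> \<le> 1/3^n" using assms(2) by blast
    have "dist y p = sqrt ((fst y - fst p)^2 + (snd y - snd p)^2)"
      by (simp add: dist_prod_def dist_real_def)
    also have "\<dots> \<le> \<bar>fst y - fst p\<bar> + \<bar>snd y - snd p\<bar>" by (rule sqrt_sum_squares_le_sum_abs)
    also have "\<dots> \<le> 2 * (1/3)^n" using y by (simp add: power_one_over)
    also have "\<dots> < e" using n by simp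
    finally show "\<exists>y\<in>K. dist y p < e" using y by blast
  qed
  then show ?thesis using assms(1) by simp
qed

lemma unit_diff: "a \<in> unit_sq \<Longrightarrow> b \<in> unit_sq \<Longrightarrow> \<bar>fst a - fst b\<bar> \<le> 1 \<and> \<bar>snd a - snd b\<bar> \<le> 1"
  by (auto simp: unit_sq_def)

lemma invariant_sub:
  assumes K: "K \<noteq> {}" "compact K" "K \<subseteq> unit_sq" "K = Fc K"
    and K': "K' \<subseteq> unit_sq" "K' = Fc K'"
  shows "K' \<subseteq> K"
proof -
  have approx: "\<forall>p\<in>K'. \<exists>y\<in>K. \<bar>fst y - fst p\<bar> \<le> 1/3^n \<and> \<bar>snd y - snd p\<bar> \<le> 1/3^n" for n :: nat
  proof (induction n)
    case 0
    obtain y where y: "y \<in> K" using K(1) by blast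
    show ?case
    proof
      fix p assume "p \<in> K'"
      then have "p \<in> unit_sq" "y \<in> unit_sq" using y K(3) K'(1) by blast+
      then show "\<exists>y\<in>K. \<bar>fst y - fst p\<bar> \<le> 1/3^0 \<and> \<bar>snd y - snd p\<bar> \<le> 1/3^0"
        using y unit_diff[of y p] by auto
    qed
  next
    case (Suc n)
    show ?case
    proof
      fix p assume "p \<in> K'"
      then have "p \<in> Fc K'" using K'(2) by simp
      then obtain m p' where m: "m \<in> Mset" "p' \<in> K'" "p = cellpt m p'" unfolding Fc_def by blast
      obtain y where y: "y \<in> K" "\<bar>fst y - fst p'\<bar> \<le> 1/3^n" "\<bar>snd y - snd p'\<bar> \<le> 1/3^n"
        using Suc m(2) by blast
      have "cellpt m y \<in> Fc K" using y(1) m(1) unfolding Fc_def by blast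
      then have "cellpt m y \<in> K" using K(4) by simp
      moreover have "\<bar>fst (cellpt m y) - fst p\<bar> = \<bar>fst y - fst p'\<bar> / 3"
        "\<bar>snd (cellpt m y) - snd p\<bar> = \<bar>snd y - snd p'\<bar> / 3"
        unfolding m(3) cellpt_diff by simp_all
      ultimately show "\<exists>y\<in>K. \<bar>fst y - fst p\<bar> \<le> 1/3^Suc n \<and> \<bar>snd y - snd p\<bar> \<le> 1/3^Suc n"
        using y(2,3) by (intro bexI[of _ "cellpt m y"]) auto
    qed
  qed
  show ?thesis
  proof
    fix p assume p: "p \<in> K'"
    show "p \<in> K"
    proof (rule closure_by_coords[OF compact_imp_closed[OF K(2)]])
      fix n :: nat show "\<exists>y\<in>K. \<bar>fst y - fst p\<bar> \<le> 1/3^n \<and> \<bar>snd y - snd p\<bar> \<le> 1/3^n"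
        using approx[of n] p by blast
    qed
  qed
qed

lemma Pc_sub_F: "Pc \<subseteq> Fc Pc"
proof
  fix p assume "p \<in> Pc"
  then show "p \<in> Fc Pc"
  proof cases
    case (base)
    then show ?thesis using M0_F Pc.base unfolding Fc_def by blast
  next
    case (step q m)
    then show ?thesis unfolding Fc_def by blast
  qed
qed

lemma K0_props: "closure Pc \<noteq> {} \<and> compact (closure Pc) \<and> closure Pc \<subseteq> unit_sq \<and>
   closure Pc = (\<Union>m\<in>Mset. cellpt m ` closure Pc)"
proof -
  have bd: "bounded Pc" using Pc_unit compact_imp_bounded[OF compact_unit_sq] bounded_subset by blast
  have cp: "compact (closure Pc)" using bd by (simp add: compact_closure)
  have sub: "closure Pc \<subseteq> unit_sq"
    using Pc_unit by (intro closure_minimal compact_imp_closed compact_unit_sq) auto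
  have ne: "closure Pc \<noteq> {}"
    using Pc.base[of "(0,0)"] closure_subset by (auto simp: M0_def)
  have s1: "Fc (closure Pc) \<subseteq> closure Pc"
    unfolding Fc_def
  proof (intro UN_least)
    fix m assume m: "m \<in> Mset"
    show "cellpt m ` closure Pc \<subseteq> closure Pc"
      by (rule image_closure_subset[OF cont_cellpt closed_closure]) (use m closure_subset Pc.step in blast)
  qed
  have s2: "closure Pc \<subseteq> Fc (closure Pc)"
  proof (rule closure_minimal[OF _ closed_Fc[OF cp]])
    show "Pc \<subseteq> Fc (closure Pc)" using Pc_sub_F closure_subset unfolding Fc_def by blast
  qed
  have "closure Pc = Fc (closure Pc)" using s1 s2 by (rule equalityI[rotated])
  then show ?thesis using cp sub ne unfolding Fc_def by simp
qed

lemma carpet_unique: "\<exists>!K. K \<noteq> {} \<and> compact K \<and> K \<subseteq> unit_sq \<and> K = (\<Union>m\<in>Mset. cellpt m ` K)"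
proof (rule ex1I[of _ "closure Pc"])
  show "closure Pc \<noteq> {} \<and> compact (closure Pc) \<and> closure Pc \<subseteq> unit_sq \<and>
   closure Pc = (\<Union>m\<in>Mset. cellpt m ` closure Pc)" by (rule K0_props)
next
  fix K assume K: "K \<noteq> {} \<and> compact K \<and> K \<subseteq> unit_sq \<and> K = (\<Union>m\<in>Mset. cellpt m ` K)"
  have K1: "K \<noteq> {}" "compact K" "K \<subseteq> unit_sq" "K = Fc K" using K unfolding Fc_def by auto
  have K2: "closure Pc \<noteq> {}" "compact (closure Pc)" "closure Pc \<subseteq> unit_sq" "closure Pc = Fc (closure Pc)"
    using K0_props unfolding Fc_def by auto
  show "K = closure Pc"
    using invariant_sub[OF K1 K2(3,4)] invariant_sub[OF K2 K1(3,4)] by (rule equalityI[rotated])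
qed

lemma carpet_eq: "carpet = closure Pc"
  unfolding carpet_def using carpet_unique K0_props by (intro the1_equality) auto

lemma carpet_props: "carpet \<noteq> {}" "compact carpet" "carpet \<subseteq> unit_sq" "carpet = Fc carpet"
  "closed carpet" "M0 \<subseteq> carpet"
proof -
  note K = K0_props[folded carpet_eq]
  show "carpet \<noteq> {}" "compact carpet" "carpet \<subseteq> unit_sq" using K by auto
  show "carpet = Fc carpet" unfolding Fc_def using K by auto
  show "closed carpet" using K compact_imp_closed by auto
  show "M0 \<subseteq> carpet" unfolding carpet_eq using closure_subset Pc.base by blast
qed



definition phi :: "'a set \<Rightarrow> (pt \<Rightarrow> 'a) \<Rightarrow> ((int\<times>int)\<times>'a) \<Rightarrow> ((int\<times>int)\<times>'a) \<Rightarrow> bool" where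
  "phi X S a b \<longleftrightarrow> a \<in> Mset \<times> X \<and> b \<in> Mset \<times> X \<and>
     (a = b \<or> (\<exists>p q. p\<in>M0 \<and> q\<in>M0 \<and> snd a = S p \<and> snd b = S q \<and> cellpt (fst a) p = cellpt (fst b) q))"

lemma phi_trans:
  assumes ss: "square_set X S" and ab: "phi X S a b" and bc: "phi X S b c"
  shows "phi X S a c"
proof -
  have inj: "inj_on S M0" using ss by (simp add: square_set_def)
  have mem: "a \<in> Mset \<times> X" "c \<in> Mset \<times> X" using ab bc by (auto simp: phi_def)
  show ?thesis
  proof (cases "a = b")
    case True then show ?thesis using bc by simp
  next
    case F1: False
    then obtain p q where pq: "p\<in>M0" "q\<in>M0" "snd a = S p" "snd b = S q" "cellpt (fst a) p = cellpt (fst b) q"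
      using ab by (auto simp: phi_def)
    show ?thesis
    proof (cases "b = c")
      case True then show ?thesis using ab by simp
    next
      case False
      then obtain p' q' where pq': "p'\<in>M0" "q'\<in>M0" "snd b = S p'" "snd c = S q'" "cellpt (fst b) p' = cellpt (fst c) q'"
        using bc by (auto simp: phi_def)
      have "q = p'" using inj pq(2,4) pq'(1,3) by (metis inj_onD)
      then show ?thesis using mem pq pq' unfolding phi_def by metis
    qed
  qed
qed

lemma gen_phi:
  assumes ss: "square_set X S" and g: "(a,b) \<in> glue_gen S"
  shows "phi X S a b \<and> phi X S b a"
proof -
  obtain m n p q where d: "a = (m, S p)" "b = (n, S q)" "m \<in> Mset" "n \<in> Mset" "p \<in> M0" "q \<in> M0"
     "cellpt m p = cellpt n q"
    using g unfolding glue_gen_def by blast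
  have "S p \<in> X" "S q \<in> X" using ss d(5,6) by (auto simp: square_set_def)
  then have mem: "a \<in> Mset \<times> X" "b \<in> Mset \<times> X" using d by auto
  have "\<exists>p' q'. p'\<in>M0 \<and> q'\<in>M0 \<and> snd a = S p' \<and> snd b = S q' \<and> cellpt (fst a) p' = cellpt (fst b) q'"
    using d by (intro exI[of _ p] exI[of _ q]) simp
  moreover have "\<exists>p' q'. p'\<in>M0 \<and> q'\<in>M0 \<and> snd b = S p' \<and> snd a = S q' \<and> cellpt (fst b) p' = cellpt (fst a) q'"
    using d by (intro exI[of _ q] exI[of _ p]) simp
  ultimately show ?thesis using mem unfolding phi_def by blast
qed

lemma glue_phi:
  assumes ss: "square_set X S" and r: "(a,b) \<in> glue_rel X S"
  shows "phi X S a b"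
proof -
  from r consider "(a,b) \<in> Id_on (Mset \<times> X)" | "(a,b) \<in> (glue_gen S \<union> (glue_gen S)\<inverse>)\<^sup>+"
    unfolding glue_rel_def by blast
  then show ?thesis
  proof cases
    case 1 then show ?thesis by (auto simp: phi_def)
  next
    case 2
    then show ?thesis
    proof (induction rule: trancl_induct)
      case (base y)
      then show ?case using gen_phi[OF ss] by blast
    next
      case (step y z)
      then have "phi X S y z" using gen_phi[OF ss] by blast
      then show ?case using phi_trans[OF ss step.IH] by blast
    qed
  qed
qed

lemma glue_equiv:
  assumes ss: "square_set X S"
  shows "equiv (Mset \<times> X) (glue_rel X S)"
proof (rule equivI)
  show "glue_rel X S \<subseteq> (Mset \<times> X) \<times> (Mset \<times> X)"
    using glue_phi[OF ss] unfolding phi_def by auto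
  show "refl_on (Mset \<times> X) (glue_rel X S)"
    unfolding refl_on_def glue_rel_def by auto
  have "sym ((glue_gen S \<union> (glue_gen S)\<inverse>)\<^sup>+)"
    by (intro sym_trancl) (simp add: sym_Un_converse)
  then show "sym (glue_rel X S)"
    unfolding glue_rel_def by (intro sym_Un sym_Id_on)
  show "trans (glue_rel X S)"
    unfolding glue_rel_def
  proof (rule transI)
    fix x y z
    assume "(x,y) \<in> Id_on (Mset \<times> X) \<union> (glue_gen S \<union> (glue_gen S)\<inverse>)\<^sup>+"
      "(y,z) \<in> Id_on (Mset \<times> X) \<union> (glue_gen S \<union> (glue_gen S)\<inverse>)\<^sup>+"
    then show "(x,z) \<in> Id_on (Mset \<times> X) \<union> (glue_gen S \<union> (glue_gen S)\<inverse>)\<^sup>+"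
      by (auto intro: trancl_trans)
  qed
qed

lemma class_mem:
  assumes ss: "square_set X S" and c: "c \<in> tensor_carrier X S" and b: "b \<in> c"
  shows "c = glue_rel X S `` {b} \<and> b \<in> Mset \<times> X"
proof -
  note eq = glue_equiv[OF ss]
  obtain x where x: "c = glue_rel X S `` {x}" "x \<in> Mset \<times> X"
    using c unfolding tensor_carrier_def by (rule quotientE)
  have xb: "(x,b) \<in> glue_rel X S" using b x by simp
  then have "glue_rel X S `` {x} = glue_rel X S `` {b}" using equiv_class_eq[OF eq] by blast
  moreover have "b \<in> Mset \<times> X" using xb eq unfolding equiv_def by blast
  ultimately show ?thesis using x by simp
qed

lemma some_mem:
  assumes ss: "square_set X S" and c: "c \<in> tensor_carrier X S"
  shows "(SOME b. b \<in> c) \<in> c"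
proof -
  obtain x where x: "c = glue_rel X S `` {x}" "x \<in> Mset \<times> X"
    using c unfolding tensor_carrier_def by (rule quotientE)
  have "x \<in> c" using x equiv_class_self[OF glue_equiv[OF ss]] by simp
  then show ?thesis by (rule someI)
qed

lemma tensor_el_carrier: "m \<in> Mset \<Longrightarrow> x \<in> X \<Longrightarrow> tensor_el X S m x \<in> tensor_carrier X S"
  unfolding tensor_el_def tensor_carrier_def by (rule quotientI) simp

lemma tensor_el_mem: "square_set X S \<Longrightarrow> m \<in> Mset \<Longrightarrow> x \<in> X \<Longrightarrow> (m,x) \<in> tensor_el X S m x"
  unfolding tensor_el_def using equiv_class_self[OF glue_equiv] by blast

lemma ss_carpet: "square_set carpet S_carpet"
  using carpet_props(6) unfolding square_set_def S_carpet_def by (auto intro: inj_onI)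

lemma tau_el:
  assumes m: "m \<in> Mset" and s: "s \<in> carpet"
  shows "tau (tensor_el carpet S_carpet m s) = cellpt m s"
proof -
  let ?c = "tensor_el carpet S_carpet m s"
  have c: "?c \<in> tensor_carrier carpet S_carpet" using m s by (rule tensor_el_carrier)
  obtain n t where b: "(SOME b. b \<in> ?c) = (n,t)" by (cases "SOME b. b \<in> ?c")
  have "(n,t) \<in> ?c" using some_mem[OF ss_carpet c] b by simp
  then have "((m,s),(n,t)) \<in> glue_rel carpet S_carpet" unfolding tensor_el_def by simp
  then have "phi carpet S_carpet (m,s) (n,t)" by (rule glue_phi[OF ss_carpet])
  then have "cellpt n t = cellpt m s" unfolding phi_def S_carpet_def by auto
  then show ?thesis unfolding tau_def Let_def b by simp
qed

lemma adj_M0: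
  assumes adj: "adjacent m k" and su: "s \<in> unit_sq" "u \<in> unit_sq" and eq: "cellpt m s = cellpt k u"
  shows "s \<in> M0 \<and> u \<in> M0"
proof -
  have e1: "of_int (fst m) + fst s = of_int (fst k) + fst u"
    using arg_cong[OF eq, of fst] by (simp add: cellpt_fst)
  have e2: "of_int (snd m) + snd s = of_int (snd k) + snd u"
    using arg_cong[OF eq, of snd] by (simp add: cellpt_snd)
  obtain s1 s2 u1 u2 where p: "s = (s1,s2)" "u = (u1,u2)" by (cases s, cases u)
  have b: "0 \<le> s1" "s1 \<le> 1" "0 \<le> s2" "s2 \<le> 1" "0 \<le> u1" "u1 \<le> 1" "0 \<le> u2" "u2 \<le> 1"
    using su by (auto simp: p unit_sq_def)
  from adj consider "snd m - snd k = 1" | "snd m - snd k = -1" | "fst m - fst k = 1" | "fst m - fst k = -1"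
    unfolding adjacent_def by arith
  then show ?thesis
  proof cases
    case 1
    then have "real_of_int (snd m - snd k) = 1" by simp
    then have "real_of_int (snd m) - real_of_int (snd k) = 1" by simp
    then have "s2 = 0" "u2 = 1" using e2 b by (auto simp: p)
    then show ?thesis using b by (auto simp: p M0_def)
  next
    case 2
    then have "real_of_int (snd m - snd k) = -1" by simp
    then have "real_of_int (snd m) - real_of_int (snd k) = -1" by simp
    then have "s2 = 1" "u2 = 0" using e2 b by (auto simp: p)
    then show ?thesis using b by (auto simp: p M0_def)
  next
    case 3
    then have "real_of_int (fst m - fst k) = 1" by simp
    then have "real_of_int (fst m) - real_of_int (fst k) = 1" by simp
    then have "s1 = 0" "u1 = 1" using e1 b by (auto simp: p)
    then show ?thesis using b by (auto simp: p M0_def)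
  next
    case 4
    then have "real_of_int (fst m - fst k) = -1" by simp
    then have "real_of_int (fst m) - real_of_int (fst k) = -1" by simp
    then have "s1 = 1" "u1 = 0" using e1 b by (auto simp: p)
    then show ?thesis using b by (auto simp: p M0_def)
  qed
qed

lemma adj_glue:
  assumes adj: "adjacent m k" and mk: "m \<in> Mset" "k \<in> Mset" and su: "s \<in> unit_sq" "u \<in> unit_sq"
    and eq: "cellpt m s = cellpt k u"
  shows "((m,s),(k,u)) \<in> glue_rel carpet S_carpet"
proof -
  have M: "s \<in> M0" "u \<in> M0" using adj_M0[OF adj su eq] by auto
  have "((m, S_carpet s), (k, S_carpet u)) \<in> glue_gen S_carpet"
    unfolding glue_gen_def using adj mk M eq by blast
  then have "((m,s),(k,u)) \<in> glue_gen S_carpet" by (simp add: S_carpet_def)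
  then show ?thesis unfolding glue_rel_def by blast
qed



lemma int_diff_small:
  fixes a b :: int and x y :: real
  assumes "of_int a + x = of_int b + y" "0 \<le> x" "x \<le> 1" "0 \<le> y" "y \<le> 1"
  shows "a = b \<or> \<bar>a - b\<bar> = 1"
proof -
  have "real_of_int (a - b) < real_of_int 2" using assms by simp
  then have 1: "a - b < 2" by (simp only: of_int_less_iff)
  have "real_of_int (-2) < real_of_int (a - b)" using assms by simp
  then have 2: "-2 < a - b" by (simp only: of_int_less_iff)
  from 1 2 show ?thesis by arith
qed

lemma carpet_glue:
  assumes mn: "m \<in> Mset" "n \<in> Mset" and st: "s \<in> carpet" "t \<in> carpet" and eq: "cellpt m s = cellpt n t"
  shows "((m,s),(n,t)) \<in> glue_rel carpet S_carpet"
proof -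
  let ?R = "glue_rel carpet S_carpet"
  have tr: "trans ?R" using glue_equiv[OF ss_carpet] by (simp add: equiv_def)
  have su: "s \<in> unit_sq" "t \<in> unit_sq" using st carpet_props(3) by auto
  have e1: "of_int (fst m) + fst s = of_int (fst n) + fst t"
    using arg_cong[OF eq, of fst] by (simp add: cellpt_fst)
  have e2: "of_int (snd m) + snd s = of_int (snd n) + snd t"
    using arg_cong[OF eq, of snd] by (simp add: cellpt_snd)
  have b: "0 \<le> fst s" "fst s \<le> 1" "0 \<le> snd s" "snd s \<le> 1" "0 \<le> fst t" "fst t \<le> 1" "0 \<le> snd t" "snd t \<le> 1"
    using su by (auto simp: unit_sq_def)
  have d1: "fst m = fst n \<or> \<bar>fst m - fst n\<bar> = 1" using int_diff_small[OF e1] b by blast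
  have d2: "snd m = snd n \<or> \<bar>snd m - snd n\<bar> = 1" using int_diff_small[OF e2] b by blast
  consider "m = n" | "fst m = fst n" "\<bar>snd m - snd n\<bar> = 1" | "snd m = snd n" "\<bar>fst m - fst n\<bar> = 1"
    | "\<bar>fst m - fst n\<bar> = 1" "\<bar>snd m - snd n\<bar> = 1"
    using d1 d2 by (cases m, cases n) auto
  then show ?thesis
  proof cases
    case 1
    then have "s = t" using eq cellpt_inj by blast
    then show ?thesis using 1 mn st unfolding glue_rel_def by auto
  next
    case 2
    then have "adjacent m n" by (simp add: adjacent_def)
    then show ?thesis using adj_glue mn su eq by blast
  next
    case 3
    then have "adjacent m n" by (simp add: adjacent_def)
    then show ?thesis using adj_glue mn su eq by blast
  next
    case 4
    have M: "fst m \<in> {0,1,2}" "snd m \<in> {0,1,2}" "fst n \<in> {0,1,2}" "snd n \<in> {0,1,2}"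
      using mn Mset_D by auto
    show ?thesis
    proof (cases "(fst n, snd m) \<in> Mset")
      case True
      let ?k = "(fst n, snd m)" and ?u = "(fst t, snd s)"
      have a1: "adjacent m ?k" "adjacent ?k n" using 4 by (auto simp: adjacent_def abs_minus_commute)
      have u: "?u \<in> unit_sq" using b by (simp add: unit_sq_def)
      have c1: "cellpt m s = cellpt ?k ?u" "cellpt ?k ?u = cellpt n t"
        using e1 e2 by (simp_all add: cellpt_def)
      have "((m,s),(?k,?u)) \<in> ?R" by (rule adj_glue[OF a1(1) mn(1) True su(1) u c1(1)])
      moreover have "((?k,?u),(n,t)) \<in> ?R" by (rule adj_glue[OF a1(2) True mn(2) u su(2) c1(2)])
      ultimately show ?thesis using transD[OF tr] by blast
    next
      case False
      then have "(fst n, snd m) = (1,1)" using M by (auto simp: Mset_def)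
      then have K: "(fst m, snd n) \<in> Mset" using M 4 by (auto simp: Mset_def)
      let ?k = "(fst m, snd n)" and ?u = "(fst s, snd t)"
      have a1: "adjacent m ?k" "adjacent ?k n" using 4 by (auto simp: adjacent_def abs_minus_commute)
      have u: "?u \<in> unit_sq" using b by (simp add: unit_sq_def)
      have c1: "cellpt m s = cellpt ?k ?u" "cellpt ?k ?u = cellpt n t"
        using e1 e2 by (simp_all add: cellpt_def)
      have "((m,s),(?k,?u)) \<in> ?R" by (rule adj_glue[OF a1(1) mn(1) K su(1) u c1(1)])
      moreover have "((?k,?u),(n,t)) \<in> ?R" by (rule adj_glue[OF a1(2) K mn(2) u su(2) c1(2)])
      ultimately show ?thesis using transD[OF tr] by blast
    qed
  qed
qed

lemma carrier_el:
  assumes "c \<in> tensor_carrier X S"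
  obtains m x where "m \<in> Mset" "x \<in> X" "c = tensor_el X S m x"
  using assms unfolding tensor_carrier_def tensor_el_def by (auto elim!: quotientE)

lemma tau_inj: "inj_on tau (tensor_carrier carpet S_carpet)"
proof (rule inj_onI)
  fix c c' assume c: "c \<in> tensor_carrier carpet S_carpet" and c': "c' \<in> tensor_carrier carpet S_carpet"
    and eq: "tau c = tau c'"
  obtain m s where ms: "m \<in> Mset" "s \<in> carpet" "c = tensor_el carpet S_carpet m s" using c by (rule carrier_el)
  obtain n t where nt: "n \<in> Mset" "t \<in> carpet" "c' = tensor_el carpet S_carpet n t" using c' by (rule carrier_el)
  have "cellpt m s = cellpt n t" using eq ms nt tau_el by simp
  then have "((m,s),(n,t)) \<in> glue_rel carpet S_carpet" using carpet_glue ms nt by blast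
  then show "c = c'" unfolding ms(3) nt(3) tensor_el_def
    using equiv_class_eq[OF glue_equiv[OF ss_carpet]] by blast
qed

lemma tau_img: "tau ` tensor_carrier carpet S_carpet = carpet"
proof
  show "tau ` tensor_carrier carpet S_carpet \<subseteq> carpet"
  proof
    fix p assume "p \<in> tau ` tensor_carrier carpet S_carpet"
    then obtain c where c: "c \<in> tensor_carrier carpet S_carpet" "p = tau c" by blast
    obtain m s where ms: "m \<in> Mset" "s \<in> carpet" "c = tensor_el carpet S_carpet m s" using c(1) by (rule carrier_el)
    have "p = cellpt m s" using c(2) tau_el[OF ms(1,2)] unfolding ms(3) by simp
    then have "p \<in> Fc carpet" using ms unfolding Fc_def by blast
    then show "p \<in> carpet" using carpet_props(4)[symmetric] by simp
  qed
  show "carpet \<subseteq> tau ` tensor_carrier carpet S_carpet"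
  proof
    fix p assume "p \<in> carpet"
    then have "p \<in> Fc carpet" using carpet_props(4)[symmetric] by simp
    then obtain m s where ms: "m \<in> Mset" "s \<in> carpet" "p = cellpt m s" unfolding Fc_def by blast
    then have "p = tau (tensor_el carpet S_carpet m s)" using tau_el[OF ms(1,2)] by simp
    moreover have "tensor_el carpet S_carpet m s \<in> tensor_carrier carpet S_carpet"
      using tensor_el_carrier[OF ms(1,2)] .
    ultimately show "p \<in> tau ` tensor_carrier carpet S_carpet" by (rule image_eqI)
  qed
qed

lemma tau_inv_el: "m \<in> Mset \<Longrightarrow> s \<in> carpet \<Longrightarrow> tau_inv (cellpt m s) = tensor_el carpet S_carpet m s"
  unfolding tau_inv_def by (rule inv_into_f_eq[OF tau_inj tensor_el_carrier tau_el])

lemma tau_tau_inv: "p \<in> carpet \<Longrightarrow> tau (tau_inv p) = p"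
  unfolding tau_inv_def using tau_img f_inv_into_f by metis

lemma tau_inv_carrier: "p \<in> carpet \<Longrightarrow> tau_inv p \<in> tensor_carrier carpet S_carpet"
  unfolding tau_inv_def using tau_img inv_into_into by metis

lemma boundary_cell:
  assumes p: "p \<in> M0" and m: "m \<in> Mset" and u: "u \<in> unit_sq" and pu: "p = cellpt m u"
  shows "u \<in> M0"
proof -
  have M: "0 \<le> fst m" "fst m \<le> 2" "0 \<le> snd m" "snd m \<le> 2" using Mset_D[OF m] by auto
  have Mr: "0 \<le> real_of_int (fst m)" "real_of_int (fst m) \<le> 2" "0 \<le> real_of_int (snd m)" "real_of_int (snd m) \<le> 2"
    using M by simp_all
  have e: "fst p = (of_int (fst m) + fst u)/3" "snd p = (of_int (snd m) + snd u)/3"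
    using pu by (simp_all add: cellpt_fst cellpt_snd)
  have b: "0 \<le> fst u" "fst u \<le> 1" "0 \<le> snd u" "snd u \<le> 1" using u by (auto simp: unit_sq_def)
  have "fst p = 0 \<or> fst p = 1 \<or> snd p = 0 \<or> snd p = 1" using p by (auto simp: M0_def)
  then have "fst u = 0 \<or> fst u = 1 \<or> snd u = 0 \<or> snd u = 1"
    using e b Mr by (elim disjE) (simp_all add: field_simps; linarith)+
  then show ?thesis using b by (cases u) (auto simp: M0_def)
qed

lemma tensor_S_eq:
  assumes p: "p \<in> M0"
  shows "\<exists>m\<in>Mset. \<exists>u\<in>M0. cellpt m u = p \<and> tensor_S X S p = tensor_el X S m (S u)"
proof -
  have "p \<in> Fc carpet" using p carpet_props(6) carpet_props(4)[symmetric] by auto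
  then obtain m0 s where "m0 \<in> Mset" "s \<in> carpet" "p = cellpt m0 s" unfolding Fc_def by blast
  then have ex: "\<exists>m. m \<in> Mset \<and> p \<in> cellpt m ` unit_sq" using carpet_props(3) by blast
  define m where "m = (SOME m. m \<in> Mset \<and> p \<in> cellpt m ` unit_sq)"
  have m: "m \<in> Mset \<and> p \<in> cellpt m ` unit_sq" unfolding m_def by (rule someI_ex[OF ex])
  then obtain u where u: "u \<in> unit_sq" "p = cellpt m u" by blast
  have "uncell m p = u" using u by simp
  moreover have "u \<in> M0" using boundary_cell[OF p _ u] m u by blast
  moreover have "tensor_S X S p = tensor_el X S m (S (uncell m p))"
    unfolding tensor_S_def m_def Let_def by simp
  ultimately show ?thesis using m u by auto
qed

lemma coalg_carpet: "coalgebra carpet S_carpet tau_inv"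
  unfolding coalgebra_def squaset_mor_def
proof (intro conjI ss_carpet ballI)
  show "tau_inv ` carpet \<subseteq> tensor_carrier carpet S_carpet" using tau_inv_carrier by blast
  fix p assume p: "p \<in> M0"
  obtain m u where mu: "m \<in> Mset" "u \<in> M0" "cellpt m u = p"
    "tensor_S carpet S_carpet p = tensor_el carpet S_carpet m (S_carpet u)"
    using tensor_S_eq[OF p] by blast
  have "u \<in> carpet" using mu(2) carpet_props(6) by blast
  then show "tau_inv (S_carpet p) = tensor_S carpet S_carpet p"
    using mu tau_inv_el[OF mu(1) \<open>u \<in> carpet\<close>] by (simp add: S_carpet_def)
qed



definition val :: "(nat \<Rightarrow> int) \<Rightarrow> real" where
  "val d = (\<Sum>k. real_of_int (d k) / 3 ^ Suc k)"

lemma geo2: "(\<lambda>k. 2 / 3 ^ Suc k :: real) sums 1"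
proof -
  have "(\<lambda>k. (1/3::real) ^ k) sums (1 / (1 - 1/3))" by (rule geometric_sums) simp
  then have "(\<lambda>k. 2/3 * (1/3::real) ^ k) sums (2/3 * (1 / (1 - 1/3)))" by (rule sums_mult)
  moreover have "(\<lambda>k. 2/3 * (1/3::real) ^ k) = (\<lambda>k. 2 / 3 ^ Suc k)"
    by (simp add: power_one_over)
  ultimately show ?thesis by simp
qed

lemma val_props:
  assumes d: "\<And>k. d k \<in> {0,1,2}"
  shows "summable (\<lambda>k. real_of_int (d k) / 3 ^ Suc k)" "0 \<le> val d" "val d \<le> 1"
    "val d = (real_of_int (d 0) + val (\<lambda>k. d (Suc k))) / 3"
proof -
  have le: "real_of_int (d k) / 3 ^ Suc k \<le> 2 / 3 ^ Suc k" for k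
    using d[of k] by (auto simp: divide_right_mono)
  have ge: "0 \<le> real_of_int (d k) / 3 ^ Suc k" for k
    using d[of k] by auto
  have nb: "norm (real_of_int (d k) / 3 ^ Suc k) \<le> 2 / 3 ^ Suc k" for k
    using le[of k] ge[of k] by (metis real_norm_def abs_of_nonneg)
  show sm: "summable (\<lambda>k. real_of_int (d k) / 3 ^ Suc k)"
    by (rule summable_comparison_test'[OF sums_summable[OF geo2] nb])
  show "0 \<le> val d" unfolding val_def by (rule suminf_nonneg[OF sm ge])
  have "val d \<le> (\<Sum>k. 2 / 3 ^ Suc k)" unfolding val_def
    by (rule suminf_le[OF le sm sums_summable[OF geo2]])
  then show "val d \<le> 1" using sums_unique[OF geo2] by simp
  have d': "\<And>k. d (Suc k) \<in> {0,1,2}" using d by blast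
  have sm': "summable (\<lambda>k. real_of_int (d (Suc k)) / 3 ^ Suc k)"
  proof -
    have "summable (\<lambda>k. real_of_int (d (Suc k)) / 3 ^ Suc (Suc k))"
      using summable_Suc_iff[where f="\<lambda>k. real_of_int (d k) / 3 ^ Suc k"] sm by simp
    then have "summable (\<lambda>k. 3 * (real_of_int (d (Suc k)) / 3 ^ Suc (Suc k)))" by (rule summable_mult)
    moreover have "(\<lambda>k. 3 * (real_of_int (d (Suc k)) / 3 ^ Suc (Suc k))) = (\<lambda>k. real_of_int (d (Suc k)) / 3 ^ Suc k)"
      by (simp add: field_simps)
    ultimately show ?thesis by simp
  qed
  have "(\<Sum>k. real_of_int (d (Suc k)) / 3 ^ Suc (Suc k)) = val d - real_of_int (d 0) / 3"
    using suminf_split_head[OF sm] unfolding val_def by simp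
  moreover have "(\<Sum>k. real_of_int (d (Suc k)) / 3 ^ Suc (Suc k)) = 1/3 * val (\<lambda>k. d (Suc k))"
  proof -
    have "(\<lambda>k. real_of_int (d (Suc k)) / 3 ^ Suc (Suc k)) = (\<lambda>k. 1/3 * (real_of_int (d (Suc k)) / 3 ^ Suc k))"
      by (simp add: field_simps)
    then have "(\<Sum>k. real_of_int (d (Suc k)) / 3 ^ Suc (Suc k)) = (\<Sum>k. 1/3 * (real_of_int (d (Suc k)) / 3 ^ Suc k))"
      by (rule arg_cong)
    also have "\<dots> = 1/3 * (\<Sum>k. real_of_int (d (Suc k)) / 3 ^ Suc k)" by (rule suminf_mult[OF sm'])
    finally show ?thesis unfolding val_def .
  qed
  ultimately show "val d = (real_of_int (d 0) + val (\<lambda>k. d (Suc k))) / 3" by simp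
qed


definition stp :: "('a \<Rightarrow> ((int \<times> int) \<times> 'a) set) \<Rightarrow> 'a \<Rightarrow> (int \<times> int) \<times> 'a" where
  "stp a x = (SOME mx. mx \<in> a x)"
definition dig :: "('a \<Rightarrow> ((int \<times> int) \<times> 'a) set) \<Rightarrow> 'a \<Rightarrow> int \<times> int" where
  "dig a x = fst (stp a x)"
definition nxt :: "('a \<Rightarrow> ((int \<times> int) \<times> 'a) set) \<Rightarrow> 'a \<Rightarrow> 'a" where
  "nxt a x = snd (stp a x)"
definition hh :: "('a \<Rightarrow> ((int \<times> int) \<times> 'a) set) \<Rightarrow> 'a \<Rightarrow> pt" where
  "hh a x = (val (\<lambda>k. fst (dig a ((nxt a ^^ k) x))), val (\<lambda>k. snd (dig a ((nxt a ^^ k) x))))"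

lemma step_props:
  assumes co: "coalgebra A SA a" and x: "x \<in> A"
  shows "stp a x \<in> a x" "dig a x \<in> Mset" "nxt a x \<in> A"
    "a x = tensor_el A SA (dig a x) (nxt a x)"
proof -
  have ss: "square_set A SA" and c: "a x \<in> tensor_carrier A SA"
    using co x unfolding coalgebra_def squaset_mor_def by auto
  show st: "stp a x \<in> a x" unfolding stp_def by (rule some_mem[OF ss c])
  have st2: "stp a x = (dig a x, nxt a x)" by (simp add: dig_def nxt_def)
  from class_mem[OF ss c st] st2
  show "dig a x \<in> Mset" "nxt a x \<in> A" "a x = tensor_el A SA (dig a x) (nxt a x)"
    by (auto simp: tensor_el_def)
qed

lemma iter_in: "coalgebra A SA a \<Longrightarrow> x \<in> A \<Longrightarrow> (nxt a ^^ k) x \<in> A"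
  by (induction k) (auto intro: step_props(3))

lemma tmap_eq: "tensor_map Y T f (a x) = tensor_el Y T (dig a x) (f (nxt a x))"
  by (simp add: tensor_map_def stp_def dig_def nxt_def split_beta Let_def)

lemma hh_rec:
  assumes co: "coalgebra A SA a" and x: "x \<in> A"
  shows "hh a x = cellpt (dig a x) (hh a (nxt a x))" "hh a x \<in> unit_sq"
proof -
  have D: "dig a ((nxt a ^^ k) x) \<in> Mset" for k using step_props(2)[OF co iter_in[OF co x]] .
  have d1: "fst (dig a ((nxt a ^^ k) x)) \<in> {0,1,2}" for k using Mset_D[OF D[of k]] by blast
  have d2: "snd (dig a ((nxt a ^^ k) x)) \<in> {0,1,2}" for k using Mset_D[OF D[of k]] by blast
  have sh: "(nxt a ^^ Suc k) x = (nxt a ^^ k) (nxt a x)" for k by (simp add: funpow_Suc_right del: funpow.simps)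
  note v1 = val_props[of "\<lambda>k. fst (dig a ((nxt a ^^ k) x))", OF d1]
  note v2 = val_props[of "\<lambda>k. snd (dig a ((nxt a ^^ k) x))", OF d2]
  show "hh a x = cellpt (dig a x) (hh a (nxt a x))"
    unfolding hh_def cellpt_def using v1(4) v2(4) by (simp only: sh) simp
  show "hh a x \<in> unit_sq" unfolding hh_def unit_sq_def using v1 v2 by simp
qed

lemma rec_unique:
  assumes B: "\<And>y. y \<in> B \<Longrightarrow> nx y \<in> B"
    and g1: "\<And>y. y \<in> B \<Longrightarrow> g1 y \<in> unit_sq \<and> g1 y = cellpt (dg y) (g1 (nx y))"
    and g2: "\<And>y. y \<in> B \<Longrightarrow> g2 y \<in> unit_sq \<and> g2 y = cellpt (dg y) (g2 (nx y))"
  shows "\<And>y. y \<in> B \<Longrightarrow> g1 y = g2 y"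
proof -
  have bound: "\<forall>y\<in>B. \<bar>fst (g1 y) - fst (g2 y)\<bar> \<le> 1/3^n \<and> \<bar>snd (g1 y) - snd (g2 y)\<bar> \<le> 1/3^n" for n :: nat
  proof (induction n)
    case 0
    show ?case using g1 g2 unit_diff by fastforce
  next
    case (Suc n)
    show ?case
    proof
      fix y assume y: "y \<in> B"
      have e1: "g1 y = cellpt (dg y) (g1 (nx y))" and e2: "g2 y = cellpt (dg y) (g2 (nx y))"
        using g1[OF y] g2[OF y] by auto
      have IH: "\<bar>fst (g1 (nx y)) - fst (g2 (nx y))\<bar> \<le> 1/3^n \<and> \<bar>snd (g1 (nx y)) - snd (g2 (nx y))\<bar> \<le> 1/3^n"
        using Suc B[OF y] by blast
      have q: "fst (g1 y) - fst (g2 y) = (fst (g1 (nx y)) - fst (g2 (nx y)))/3"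
         "snd (g1 y) - snd (g2 y) = (snd (g1 (nx y)) - snd (g2 (nx y)))/3"
        by (subst e1, subst e2, rule cellpt_diff)+
      show "\<bar>fst (g1 y) - fst (g2 y)\<bar> \<le> 1/3^Suc n \<and> \<bar>snd (g1 y) - snd (g2 y)\<bar> \<le> 1/3^Suc n"
        unfolding q using IH by (simp add: divide_right_mono)
    qed
  qed
  have zero: "z = 0" if "\<And>n::nat. \<bar>z\<bar> \<le> 1/3^n" for z :: real
  proof (rule ccontr)
    assume "z \<noteq> 0"
    then have "\<bar>z\<bar> > 0" by simp
    then obtain n where "(1/3::real)^n < \<bar>z\<bar>" using real_arch_pow_inv[of "\<bar>z\<bar>" "1/3::real"] by auto
    then show False using that[of n] by (simp add: power_one_over)
  qed
  fix y assume y: "y \<in> B"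
  have "fst (g1 y) - fst (g2 y) = 0" "snd (g1 y) - snd (g2 y) = 0"
    using zero bound y by blast+
  then show "g1 y = g2 y" by (simp add: prod_eq_iff)
qed

lemma hh_carpet:
  assumes co: "coalgebra A SA a" and x: "x \<in> A"
  shows "hh a x \<in> carpet"
proof -
  have approx: "\<forall>x\<in>A. \<exists>y\<in>carpet. \<bar>fst y - fst (hh a x)\<bar> \<le> 1/3^n \<and> \<bar>snd y - snd (hh a x)\<bar> \<le> 1/3^n" for n :: nat
  proof (induction n)
    case 0
    obtain y where y: "y \<in> carpet" using carpet_props(1) by blast
    then have yu: "y \<in> unit_sq" using carpet_props(3) by blast
    show ?case using y yu hh_rec(2)[OF co] unit_diff by fastforce
  next
    case (Suc n)
    show ?case
    proof
      fix x assume x: "x \<in> A"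
      obtain y where y: "y \<in> carpet" "\<bar>fst y - fst (hh a (nxt a x))\<bar> \<le> 1/3^n" "\<bar>snd y - snd (hh a (nxt a x))\<bar> \<le> 1/3^n"
        using Suc step_props(3)[OF co x] by blast
      have "cellpt (dig a x) y \<in> Fc carpet" using y(1) step_props(2)[OF co x] unfolding Fc_def by blast
      then have "cellpt (dig a x) y \<in> carpet" using carpet_props(4)[symmetric] by simp
      moreover have "fst (cellpt (dig a x) y) - fst (hh a x) = (fst y - fst (hh a (nxt a x)))/3"
          "snd (cellpt (dig a x) y) - snd (hh a x) = (snd y - snd (hh a (nxt a x)))/3"
        by (subst hh_rec(1)[OF co x], rule cellpt_diff)+
      ultimately show "\<exists>y\<in>carpet. \<bar>fst y - fst (hh a x)\<bar> \<le> 1/3^Suc n \<and> \<bar>snd y - snd (hh a x)\<bar> \<le> 1/3^Suc n"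
        using y(2,3) by (intro bexI[of _ "cellpt (dig a x) y"]) auto
    qed
  qed
  show ?thesis
    by (rule closure_by_coords[OF carpet_props(5)]) (use approx x in blast)
qed


lemma hh_bnd:
  assumes co: "coalgebra A SA a" and p: "p \<in> M0"
  shows "hh a (SA p) = p"
proof -
  have ss: "square_set A SA" and abnd: "\<And>p. p \<in> M0 \<Longrightarrow> a (SA p) = tensor_S A SA p"
    using co unfolding coalgebra_def squaset_mor_def by auto
  have inj: "inj_on SA M0" and BA: "SA ` M0 \<subseteq> A" using ss unfolding square_set_def by auto
  define g where "g y = inv_into M0 SA y" for y
  have key: "\<exists>q\<in>M0. nxt a y = SA q \<and> cellpt (dig a y) q = g y" if y: "y \<in> SA ` M0" for y
  proof -
    obtain p0 where p0: "p0 \<in> M0" "y = SA p0" using y by blast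
    have gy: "g y = p0" unfolding g_def p0(2) using inv_into_f_f[OF inj p0(1)] .
    obtain m u where mu: "m \<in> Mset" "u \<in> M0" "cellpt m u = p0" "tensor_S A SA p0 = tensor_el A SA m (SA u)"
      using tensor_S_eq[OF p0(1)] by blast
    have yA: "y \<in> A" using y BA by blast
    have "stp a y \<in> a y" by (rule step_props(1)[OF co yA])
    then have "stp a y \<in> tensor_el A SA m (SA u)" using abnd[OF p0(1)] mu(4) p0(2) by simp
    then have "((m, SA u), stp a y) \<in> glue_rel A SA" unfolding tensor_el_def by simp
    then have ph: "phi A SA (m, SA u) (dig a y, nxt a y)"
      using glue_phi[OF ss] by (simp add: dig_def nxt_def)
    show ?thesis
    proof (cases "(m, SA u) = (dig a y, nxt a y)")
      case True
      then show ?thesis using mu gy by (intro bexI[of _ u]) auto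
    next
      case False
      then obtain p' q' where pq: "p' \<in> M0" "q' \<in> M0" "SA u = SA p'" "nxt a y = SA q'"
        "cellpt m p' = cellpt (dig a y) q'"
        using ph unfolding phi_def by auto
      have "p' = u" using inj pq(1,3) mu(2) by (metis inj_onD)
      then show ?thesis using pq mu gy by (intro bexI[of _ q']) auto
    qed
  qed
  have B: "nxt a y \<in> SA ` M0" if "y \<in> SA ` M0" for y using key[OF that] by blast
  have gB: "g y \<in> unit_sq \<and> g y = cellpt (dig a y) (g (nxt a y))" if y: "y \<in> SA ` M0" for y
  proof -
    obtain q where q: "q \<in> M0" "nxt a y = SA q" "cellpt (dig a y) q = g y" using key[OF y] by blast
    have "g (nxt a y) = q" unfolding g_def q(2) using inv_into_f_f[OF inj q(1)] .
    moreover have "g y \<in> M0" unfolding g_def using y by (simp add: inv_into_into)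
    ultimately show ?thesis using q M0_unit by auto
  qed
  have hB: "hh a y \<in> unit_sq \<and> hh a y = cellpt (dig a y) (hh a (nxt a y))" if y: "y \<in> SA ` M0" for y
    using hh_rec[OF co] y BA by blast
  have "hh a (SA p) = g (SA p)"
    by (rule rec_unique[where B="SA ` M0" and nx="nxt a" and dg="dig a", OF B hB gB]) (use p in auto)
  also have "\<dots> = p" unfolding g_def using inv_into_f_f[OF inj p] .
  finally show ?thesis .
qed

theorem mainTheorem5:
  shows "coalgebra carpet S_carpet tau_inv \<and>
    (\<forall>(A :: 'a set) SA a. coalgebra A SA a \<longrightarrow>
       (\<exists>h. coalg_mor A SA a carpet S_carpet tau_inv h \<and>
            (\<forall>h'. coalg_mor A SA a carpet S_carpet tau_inv h' \<longrightarrow> (\<forall>x\<in>A. h' x = h x))))"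
proof (intro conjI allI impI)
  show "coalgebra carpet S_carpet tau_inv" by (rule coalg_carpet)
  fix A :: "'a set" and SA a
  assume co: "coalgebra A SA a"
  have mor: "coalg_mor A SA a carpet S_carpet tau_inv (hh a)"
    unfolding coalg_mor_def squaset_mor_def
  proof (intro conjI ballI)
    show "hh a ` A \<subseteq> carpet" using hh_carpet[OF co] by blast
    fix p assume "p \<in> M0"
    then show "hh a (SA p) = S_carpet p" using hh_bnd[OF co] by (simp add: S_carpet_def)
  next
    fix x assume x: "x \<in> A"
    have "tau_inv (hh a x) = tau_inv (cellpt (dig a x) (hh a (nxt a x)))" using hh_rec(1)[OF co x] by simp
    also have "\<dots> = tensor_el carpet S_carpet (dig a x) (hh a (nxt a x))"
      by (rule tau_inv_el[OF step_props(2)[OF co x] hh_carpet[OF co step_props(3)[OF co x]]])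
    also have "\<dots> = tensor_map carpet S_carpet (hh a) (a x)" by (simp add: tmap_eq)
    finally show "tau_inv (hh a x) = tensor_map carpet S_carpet (hh a) (a x)" .
  qed
  show "\<exists>h. coalg_mor A SA a carpet S_carpet tau_inv h \<and>
            (\<forall>h'. coalg_mor A SA a carpet S_carpet tau_inv h' \<longrightarrow> (\<forall>x\<in>A. h' x = h x))"
  proof (intro exI[of _ "hh a"] conjI mor allI impI ballI)
    fix h' x assume h': "coalg_mor A SA a carpet S_carpet tau_inv h'" and x: "x \<in> A"
    have hc: "h' ` A \<subseteq> carpet" and heq: "\<And>x. x \<in> A \<Longrightarrow> tau_inv (h' x) = tensor_map carpet S_carpet h' (a x)"
      using h' unfolding coalg_mor_def squaset_mor_def by auto
    have rec: "h' y \<in> unit_sq \<and> h' y = cellpt (dig a y) (h' (nxt a y))" if y: "y \<in> A" for y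
    proof
      show "h' y \<in> unit_sq" using hc y carpet_props(3) by blast
      have yn: "nxt a y \<in> A" "dig a y \<in> Mset" using step_props[OF co y] by auto
      have "h' y \<in> carpet" using hc y by blast
      then have "h' y = tau (tau_inv (h' y))" by (rule tau_tau_inv[symmetric])
      also have "\<dots> = tau (tensor_el carpet S_carpet (dig a y) (h' (nxt a y)))"
        using heq[OF y] by (simp add: tmap_eq)
      also have "\<dots> = cellpt (dig a y) (h' (nxt a y))"
        using tau_el yn hc by blast
      finally show "h' y = cellpt (dig a y) (h' (nxt a y))" .
    qed
    have hr: "hh a y \<in> unit_sq \<and> hh a y = cellpt (dig a y) (hh a (nxt a y))" if y: "y \<in> A" for y
      using hh_rec[OF co y] by blast
    show "h' x = hh a x"
      by (rule rec_unique[where B=A and nx="nxt a" and dg="dig a", OF step_props(3)[OF co] rec hr x])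
  qed
qed

end
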